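(* If the alphabet $\mathcal{A}\subset\mathbb{N}$ contains two consecutive positive integers $m$ and $m+1$, then the semigroup $\Gamma_{\mathcal{A}}$ has everywhere strong approximation.
   Context: For $a\in\mathbb{N}$ let $\gamma_a=\begin{pmatrix}0&1\\1&a\end{pmatrix}$. $\Gamma_{\mathcal{A}}\subset\mathrm{SL}_2(\mathbb{Z})$ is the semigroup generated by the products $\gamma_a\gamma_{a'}$, $a,a'\in\mathcal{A}$. $\Gamma_{\mathcal{A}}$ has everywhere strong approximation if for every $q\in\mathbb{N}$ the reduction of $\Gamma_{\mathcal{A}}$ modulo $q$ equals $\mathrm{SL}_2(\mathbb{Z}/q\mathbb{Z})$. *)

theory Defs
  imports "HOL-Analysis.Analysis" "HOL-Number_Theory.Cong"
begin

text \<open>2x2 integer matrices are rendered as int^2^2 (row i, column j is M $ i $ j).\<close>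

definition gamma_mat :: "nat \<Rightarrow> int^2^2" where
  "gamma_mat a = (\<chi> i j. if i = 1 then (if j = 1 then 0 else 1)
                          else (if j = 1 then 1 else int a))"

inductive_set Gamma_A :: "nat set \<Rightarrow> (int^2^2) set" for A :: "nat set" where
  gen: "a \<in> A \<Longrightarrow> a' \<in> A \<Longrightarrow> gamma_mat a ** gamma_mat a' \<in> Gamma_A A"
| mult: "g \<in> Gamma_A A \<Longrightarrow> h \<in> Gamma_A A \<Longrightarrow> g ** h \<in> Gamma_A A"

definition reduce_mod :: "int \<Rightarrow> int^2^2 \<Rightarrow> int^2^2" where
  "reduce_mod q M = (\<chi> i j. (M $ i $ j) mod q)"

text \<open>SL_2(Z/qZ), elements represented by matrices with entries in {0..q-1}.\<close>
definition SL2_mod :: "int \<Rightarrow> (int^2^2) set" where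
  "SL2_mod q = {M. (\<forall>i j. 0 \<le> M $ i $ j \<and> M $ i $ j < q) \<and> [det M = 1] (mod q)}"

definition everywhere_strong_approx :: "(int^2^2) set \<Rightarrow> bool" where
  "everywhere_strong_approx G \<longleftrightarrow> (\<forall>q::int. q \<ge> 1 \<longrightarrow> reduce_mod q ` G = SL2_mod q)"

end

theory Submission
  imports Defs
begin

definition mk :: "int \<Rightarrow> int \<Rightarrow> int \<Rightarrow> int \<Rightarrow> int^2^2" where
  "mk a b c d = (\<chi> i j. if i = 1 then (if j = 1 then a else b) else (if j = 1 then c else d))"

lemma two_ne1 [simp]: "(2::2) \<noteq> 1" by simp

lemma mk_simps [simp]: "mk a b c d $ 1 $ 1 = a" "mk a b c d $ 1 $ 2 = b"
  "mk a b c d $ 2 $ 1 = c" "mk a b c d $ 2 $ 2 = d"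
  by (simp_all add: mk_def)

lemma mk_eta: "X = mk (X$1$1) (X$1$2) (X$2$1) (X$2$2)"
  unfolding vec_eq_iff forall_2 by simp

lemma mult_ent: fixes X Y :: "int^2^2"
  shows "(X ** Y) $ i $ j = X$i$1 * Y$1$j + X$i$2 * Y$2$j"
  by (simp add: matrix_matrix_mult_def sum_2)

lemma mk_mult: "mk a b c d ** mk e f g h = mk (a*e+b*g) (a*f+b*h) (c*e+d*g) (c*f+d*h)"
  by (subst mk_eta[of "mk a b c d ** mk e f g h"]) (simp add: mult_ent)

lemma mat1_mk: "(mat 1 :: int^2^2) = mk 1 0 0 1"
  unfolding vec_eq_iff forall_2 by (simp add: mat_def)

lemma gamma_mk: "gamma_mat a = mk 0 1 1 (int a)"
  unfolding vec_eq_iff forall_2 by (simp add: gamma_mat_def)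

lemma det_mk: "det (mk a b c d) = a*d - b*c"
  by (simp add: det_2)

definition congq :: "int \<Rightarrow> int^2^2 \<Rightarrow> int^2^2 \<Rightarrow> bool" where
  "congq q X Y \<longleftrightarrow> (\<forall>i j. [X$i$j = Y$i$j] (mod q))"

lemma congq_refl: "congq q X X" by (simp add: congq_def)
lemma congq_sym: "congq q X Y \<Longrightarrow> congq q Y X" by (auto simp: congq_def cong_sym)
lemma congq_trans: "congq q X Y \<Longrightarrow> congq q Y Z \<Longrightarrow> congq q X Z"
  unfolding congq_def by (metis cong_trans)
lemma congq_mult: "congq q X Y \<Longrightarrow> congq q X' Y' \<Longrightarrow> congq q (X**X') (Y**Y')"
  unfolding congq_def mult_ent by (intro allI cong_add cong_mult) auto
lemma congq_mk: "congq q (mk a b c d) (mk e f g h) \<longleftrightarrow>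
   [a=e] (mod q) \<and> [b=f] (mod q) \<and> [c=g] (mod q) \<and> [d=h] (mod q)"
  unfolding congq_def forall_2 by simp

definition adj :: "int^2^2 \<Rightarrow> int^2^2" where
  "adj X = mk (X$2$2) (-(X$1$2)) (-(X$2$1)) (X$1$1)"

lemma adj_mk: "adj (mk a b c d) = mk d (-b) (-c) a" by (simp add: adj_def)

lemma adj_mult: "det X = 1 \<Longrightarrow> adj X ** X = mat 1"
  by (subst (2) mk_eta, subst mk_eta) (simp add: adj_mk mk_mult mat1_mk det_2 algebra_simps)

lemma congq_adj: "congq q X Y \<Longrightarrow> congq q (adj X) (adj Y)"
  by (simp add: congq_def adj_def forall_2 cong_minus_minus_iff)

lemma Gamma_det: "g \<in> Gamma_A A \<Longrightarrow> det g = 1"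
  by (induction rule: Gamma_A.induct) (simp_all add: det_mul gamma_mk det_mk)

fun pw :: "int^2^2 \<Rightarrow> nat \<Rightarrow> int^2^2" where
  "pw g 0 = mat 1" | "pw g (Suc n) = g ** pw g n"

lemma pw_add: "pw g (a+b) = pw g a ** pw g b"
  by (induction a) (simp_all add: matrix_mul_assoc)

lemma pw_one: "pw g 1 = g" by simp

lemma pw_Gamma: "g \<in> Gamma_A A \<Longrightarrow> pw g (Suc n) \<in> Gamma_A A"
proof (induction n)
  case 0 then show ?case by simp
next
  case (Suc n)
  then show ?case using Gamma_A.mult[of g A "pw g (Suc n)"] by simp
qed

lemma pw_adj: assumes "det g = 1" shows "pw (adj g) n ** pw g n = mat 1"
proof (induction n)
  case 0 then show ?case by simp
next
  case (Suc n)
  have "pw g (Suc n) = pw g n ** g" using pw_add[of g n 1] by simp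
  then have "pw (adj g) (Suc n) ** pw g (Suc n) = adj g ** (pw (adj g) n ** pw g n) ** g"
    by (simp add: matrix_mul_assoc)
  also have "\<dots> = mat 1" using Suc adj_mult[OF assms] by simp
  finally show ?case .
qed

definition box :: "int \<Rightarrow> (int^2^2) set" where
  "box q = {M. \<forall>i j. 0 \<le> M$i$j \<and> M$i$j < q}"

lemma finite_box: "finite (box q)"
proof -
  have "box q \<subseteq> (\<lambda>(a,b,c,d). mk a b c d) ` ({0..<q} \<times> {0..<q} \<times> {0..<q} \<times> {0..<q})"
  proof
    fix M assume M: "M \<in> box q"
    have "M = (\<lambda>(a,b,c,d). mk a b c d) (M$1$1, M$1$2, M$2$1, M$2$2)"
      using mk_eta by simp
    moreover have "(M$1$1, M$1$2, M$2$1, M$2$2) \<in> {0..<q} \<times> {0..<q} \<times> {0..<q} \<times> {0..<q}"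
      using M by (simp add: box_def)
    ultimately show "M \<in> (\<lambda>(a,b,c,d). mk a b c d) ` ({0..<q} \<times> {0..<q} \<times> {0..<q} \<times> {0..<q})"
      by blast
  qed
  then show ?thesis by (rule finite_subset) auto
qed

lemma reduce_congq: "reduce_mod q X = reduce_mod q Y \<Longrightarrow> congq q X Y"
  by (auto simp: reduce_mod_def vec_eq_iff congq_def cong_def)

lemma reduce_box: "q \<ge> 1 \<Longrightarrow> reduce_mod q X \<in> box q"
  by (simp add: reduce_mod_def box_def)

lemma finite_order:
  assumes "q \<ge> 1" "det g = 1"
  shows "\<exists>n\<ge>1. congq q (pw g n) (mat 1)"
proof -
  let ?f = "\<lambda>k. reduce_mod q (pw g k)"
  have "range ?f \<subseteq> box q" using reduce_box[OF assms(1)] by auto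
  then have "finite (range ?f)" using finite_box finite_subset by blast
  then have "\<not> inj ?f" using finite_imageD by fastforce
  then obtain i j where ij: "i \<noteq> j" "?f i = ?f j" unfolding inj_def by blast
  have "\<exists>i j. i < j \<and> ?f i = ?f j"
  proof (cases "i < j")
    case True then show ?thesis using ij by blast
  next
    case False then have "j < i" using ij(1) by simp
    then show ?thesis using ij(2) by metis
  qed
  then obtain i j where ij: "i < j" "?f i = ?f j" by blast
  let ?h = "adj g"
  have c: "congq q (pw g i) (pw g j)" using reduce_congq ij(2) by blast
  have "congq q (pw ?h i ** pw g i) (pw ?h i ** pw g j)"
    by (rule congq_mult[OF congq_refl c])
  moreover have "pw g j = pw g i ** pw g (j - i)" using pw_add[of g i "j-i"] ij(1) by simp
  ultimately have "congq q (mat 1) (pw g (j - i))"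
    using pw_adj[OF assms(2), of i] by (simp add: matrix_mul_assoc)
  then show ?thesis using ij(1) congq_sym by (intro exI[of _ "j - i"]) auto
qed

definition inR :: "nat set \<Rightarrow> int \<Rightarrow> int^2^2 \<Rightarrow> bool" where
  "inR A q X \<longleftrightarrow> (\<exists>g\<in>Gamma_A A. congq q g X)"

lemma inR_mult: "inR A q X \<Longrightarrow> inR A q Y \<Longrightarrow> inR A q (X ** Y)"
  unfolding inR_def by (meson Gamma_A.mult congq_mult)

lemma inR_cong: "inR A q X \<Longrightarrow> congq q X Y \<Longrightarrow> inR A q Y"
  unfolding inR_def by (meson congq_trans)

lemma inR_Gamma: "g \<in> Gamma_A A \<Longrightarrow> inR A q g"
  unfolding inR_def using congq_refl by blast

lemma inR_adj_Gamma:
  assumes q: "q \<ge> 1" and g: "g \<in> Gamma_A A"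
  shows "inR A q (adj g)"
proof -
  have d: "det g = 1" using Gamma_det[OF g] .
  obtain n where n: "n \<ge> 1" "congq q (pw g n) (mat 1)" using finite_order[OF q d] by blast
  have "congq q (pw g (n + n)) (mat 1 ** mat 1)"
    unfolding pw_add by (rule congq_mult[OF n(2) n(2)])
  then have c: "congq q (adj g ** pw g (n + n)) (adj g)"
    using congq_mult[OF congq_refl[of q "adj g"]] by fastforce
  have e: "n + n = Suc (Suc (n + n - 2))" using n(1) by simp
  have "adj g ** pw g (n + n) = (adj g ** g) ** pw g (Suc (n + n - 2))"
    by (subst e) (simp add: matrix_mul_assoc)
  also have "\<dots> = pw g (Suc (n + n - 2))" using adj_mult[OF d] by simp
  finally have "inR A q (adj g ** pw g (n + n))" using pw_Gamma[OF g] inR_Gamma by metis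
  then show ?thesis using c inR_cong by blast
qed

lemma inR_adj: "q \<ge> 1 \<Longrightarrow> inR A q X \<Longrightarrow> inR A q (adj X)"
  unfolding inR_def using inR_adj_Gamma congq_adj
  by (metis congq_trans inR_def)

abbreviation Tm :: "int \<Rightarrow> int^2^2" where "Tm k \<equiv> mk 1 k 0 1"
abbreviation Lm :: "int \<Rightarrow> int^2^2" where "Lm k \<equiv> mk 1 0 k 1"

lemma inR_basic:
  assumes "m \<in> A" "m + 1 \<in> A" "q \<ge> 1"
  shows "inR A q (mat 1)" "inR A q (Tm 1)" "inR A q (Lm 1)"
proof -
  let ?P = "gamma_mat m ** gamma_mat m"
  let ?Q = "gamma_mat m ** gamma_mat (m+1)"
  let ?U = "gamma_mat (m+1) ** gamma_mat m"
  have G: "?P \<in> Gamma_A A" "?Q \<in> Gamma_A A" "?U \<in> Gamma_A A"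
    using assms by (auto intro: Gamma_A.gen)
  have R: "inR A q ?P" "inR A q ?Q" "inR A q ?U" "inR A q (adj ?P)"
    using G inR_Gamma inR_adj_Gamma assms(3) by auto
  have "adj ?P ** ?P = mat 1" using adj_mult Gamma_det G(1) by blast
  then show "inR A q (mat 1)" using inR_mult[OF R(4) R(1)] by simp
  have "adj ?P ** ?Q = Tm 1"
    by (simp add: gamma_mk mk_mult adj_mk algebra_simps power2_eq_square)
  then show "inR A q (Tm 1)" using inR_mult[OF R(4) R(2)] by simp
  have "?U ** adj ?P = Lm 1"
    by (simp add: gamma_mk mk_mult adj_mk algebra_simps power2_eq_square)
  then show "inR A q (Lm 1)" using inR_mult[OF R(3) R(4)] by simp
qed

lemma inR_TL:
  assumes "m \<in> A" "m + 1 \<in> A" "q \<ge> 1"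
  shows "inR A q (Tm k)" "inR A q (Lm k)"
proof -
  have nT: "inR A q (Tm (int n))" for n
  proof (induction n)
    case 0 then show ?case using inR_basic[OF assms] by (simp add: mat1_mk)
  next
    case (Suc n)
    have "Tm (int (Suc n)) = Tm (int n) ** Tm 1" by (simp add: mk_mult)
    then show ?case using inR_mult[OF Suc inR_basic(2)[OF assms]] by simp
  qed
  have nL: "inR A q (Lm (int n))" for n
  proof (induction n)
    case 0 then show ?case using inR_basic[OF assms] by (simp add: mat1_mk)
  next
    case (Suc n)
    have "Lm (int (Suc n)) = Lm (int n) ** Lm 1" by (simp add: mk_mult add.commute)
    then show ?case using inR_mult[OF Suc inR_basic(3)[OF assms]] by simp
  qed
  have k: "k mod q = int (nat (k mod q))" using assms(3) by simp
  have c: "[k mod q = k] (mod q)" by (simp add: cong_def)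
  show "inR A q (Tm k)"
    using inR_cong[OF nT[of "nat (k mod q)"]] c k by (simp add: congq_mk)
  show "inR A q (Lm k)"
    using inR_cong[OF nL[of "nat (k mod q)"]] c k by (simp add: congq_mk)
qed

lemma cong_lin: "[(a::int) * d = 1] (mod q) \<Longrightarrow> \<exists>t. a * d = 1 + q * t"
proof -
  assume "[a * d = 1] (mod q)"
  then have "\<exists>k. 1 = a * d + q * k" by (simp only: cong_iff_lin)
  then obtain k where "1 = a * d + q * k" by blast
  then show ?thesis by (intro exI[of _ "-k"]) simp
qed

lemma inR_base:
  assumes "m \<in> A" "m + 1 \<in> A" "q \<ge> 1" and ad: "[a * d = 1] (mod q)"
  shows "inR A q (mk a b 0 d)"
proof -
  obtain t where t: "a * d = 1 + q * t" using cong_lin[OF ad] by blast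
  note TL = inR_TL[OF assms(1-3)]
  have X1: "inR A q (Tm a ** Lm (-d) ** Tm a)" using TL inR_mult by blast
  have "congq q (Tm a ** Lm (-d) ** Tm a) (mk 0 a (-d) 0)"
  proof -
    have "Tm a ** Lm (-d) ** Tm a = mk (1 - a*d) (a*(1-a*d)+a) (-d) (1-a*d)"
      by (simp add: mk_mult algebra_simps)
    moreover have "[1 - a*d = 0] (mod q)" unfolding cong_iff_lin
      by (rule exI[of _ t]) (simp add: t)
    moreover have "[a*(1-a*d)+a = a] (mod q)" unfolding cong_iff_lin
      by (rule exI[of _ "a*t"]) (simp add: t algebra_simps)
    ultimately show ?thesis by (simp add: congq_mk)
  qed
  then have X2: "inR A q (mk 0 a (-d) 0)" using X1 inR_cong by blast
  have W: "inR A q (Tm (-1) ** Lm 1 ** Tm (-1))" using TL inR_mult by blast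
  have "Tm (-1) ** Lm 1 ** Tm (-1) = mk 0 (-1) 1 0" by (simp add: mk_mult)
  then have "inR A q (mk 0 a (-d) 0 ** mk 0 (-1) 1 0 ** Tm (d*b))"
    using X2 W TL inR_mult by metis
  moreover have "mk 0 a (-d) 0 ** mk 0 (-1) 1 0 ** Tm (d*b) = mk a (a*(d*b)) 0 d"
    by (simp add: mk_mult)
  moreover have "[a*(d*b) = b] (mod q)"
  proof -
    have "a*(d*b) = (1+q*t)*b" by (simp add: t[symmetric] mult.assoc)
    then have "b = a*(d*b) + q*(-(b*t))" by (simp add: algebra_simps)
    then show ?thesis unfolding cong_iff_lin by blast
  qed
  ultimately show ?thesis using inR_cong by (fastforce simp: congq_mk)
qed

lemma inR_all:
  assumes A: "m \<in> A" "m + 1 \<in> A" and q: "q \<ge> 1"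
  shows "[a * d - b * c = 1] (mod q) \<Longrightarrow> inR A q (mk a b c d)"
proof (induction "nat (\<bar>a\<bar> + \<bar>c\<bar>)" arbitrary: a b c d rule: less_induct)
  case less
  note TL = inR_TL[OF A q]
  show ?case
  proof (cases "c = 0")
    case True
    then show ?thesis using inR_base[OF A q, of a d b] less.prems by simp
  next
    case c0: False
    show ?thesis
    proof (cases "a = 0")
      case True
      have "inR A q (mk (-c) (-d) 0 b)"
        using inR_base[OF A q, of "-c" b "-d"] less.prems True by (simp add: mult.commute)
      moreover have "inR A q (Tm 1 ** Lm (-1) ** Tm 1)"
        by (rule inR_mult[OF inR_mult[OF TL(1) TL(2)] TL(1)])
      ultimately have "inR A q (Tm 1 ** Lm (-1) ** Tm 1 ** mk (-c) (-d) 0 b)"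
        by (rule inR_mult[rotated])
      moreover have "Tm 1 ** Lm (-1) ** Tm 1 ** mk (-c) (-d) 0 b = mk a b c d"
        using True by (simp add: mk_mult)
      ultimately show ?thesis by simp
    next
      case a0: False
      show ?thesis
      proof (cases "\<bar>c\<bar> \<le> \<bar>a\<bar>")
        case True
        define k where "k = a div c"
        have e: "a - k * c = a mod c" unfolding k_def by (simp add: minus_div_mult_eq_mod)
        have "\<bar>a mod c\<bar> < \<bar>c\<bar>" using abs_mod_less c0 by blast
        then have lt: "nat (\<bar>a - k*c\<bar> + \<bar>c\<bar>) < nat (\<bar>a\<bar> + \<bar>c\<bar>)" using e True by simp
        have "(a - k*c) * d - (b - k*d) * c = a * d - b * c" by (simp add: algebra_simps)
        then have "[(a - k*c) * d - (b - k*d) * c = 1] (mod q)"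
          using less.prems by simp
        then have "inR A q (mk (a - k*c) (b - k*d) c d)" using less.hyps[OF lt] by blast
        then have "inR A q (Tm k ** mk (a - k*c) (b - k*d) c d)" by (rule inR_mult[OF TL(1)])
        moreover have "Tm k ** mk (a - k*c) (b - k*d) c d = mk a b c d" by (simp add: mk_mult)
        ultimately show ?thesis by simp
      next
        case False
        define k where "k = c div a"
        have e: "c - k * a = c mod a" unfolding k_def by (simp add: minus_div_mult_eq_mod)
        have "\<bar>c mod a\<bar> < \<bar>a\<bar>" using abs_mod_less a0 by blast
        then have lt: "nat (\<bar>a\<bar> + \<bar>c - k*a\<bar>) < nat (\<bar>a\<bar> + \<bar>c\<bar>)" using e False by simp
        have "a * (d - k*b) - b * (c - k*a) = a * d - b * c" by (simp add: algebra_simps)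
        then have "[a * (d - k*b) - b * (c - k*a) = 1] (mod q)"
          using less.prems by simp
        then have "inR A q (mk a b (c - k*a) (d - k*b))" using less.hyps[OF lt] by blast
        then have "inR A q (Lm k ** mk a b (c - k*a) (d - k*b))" by (rule inR_mult[OF TL(2)])
        moreover have "Lm k ** mk a b (c - k*a) (d - k*b) = mk a b c d" by (simp add: mk_mult)
        ultimately show ?thesis by simp
      qed
    qed
  qed
qed

lemma cong_mod_self: "[(x::int) mod q = x] (mod q)" by (simp add: cong_def)

theorem lemmaB3:
  fixes A :: "nat set" and m :: nat
  assumes "m \<ge> 1" and "m \<in> A" and "m + 1 \<in> A"
  shows "everywhere_strong_approx (Gamma_A A)"
  unfolding everywhere_strong_approx_def
proof (intro allI impI)
  fix q :: int assume q: "q \<ge> 1"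
  show "reduce_mod q ` Gamma_A A = SL2_mod q"
  proof
    show "reduce_mod q ` Gamma_A A \<subseteq> SL2_mod q"
    proof
      fix M assume "M \<in> reduce_mod q ` Gamma_A A"
      then obtain g where g: "g \<in> Gamma_A A" "M = reduce_mod q g" by blast
      have ent: "M $ i $ j = g $ i $ j mod q" for i j using g(2) by (simp add: reduce_mod_def)
      have "[M$1$1 * M$2$2 - M$1$2 * M$2$1 = g$1$1 * g$2$2 - g$1$2 * g$2$1] (mod q)"
        unfolding ent by (intro cong_diff cong_mult cong_mod_self)
      then have "[det M = det g] (mod q)" by (simp only: det_2)
      then have "[det M = 1] (mod q)" using Gamma_det[OF g(1)] by simp
      moreover have "\<forall>i j. 0 \<le> M $ i $ j \<and> M $ i $ j < q"
        using q unfolding ent by simp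
      ultimately show "M \<in> SL2_mod q" by (simp add: SL2_mod_def)
    qed
  next
    show "SL2_mod q \<subseteq> reduce_mod q ` Gamma_A A"
    proof
      fix M assume M: "M \<in> SL2_mod q"
      then have "[M$1$1 * M$2$2 - M$1$2 * M$2$1 = 1] (mod q)"
        by (simp add: SL2_mod_def det_2)
      then have "inR A q (mk (M$1$1) (M$1$2) (M$2$1) (M$2$2))"
        by (rule inR_all[OF assms(2,3) q])
      then have "inR A q M" by (simp only: mk_eta[of M, symmetric])
      then obtain g where g: "g \<in> Gamma_A A" "congq q g M"
        unfolding inR_def by blast
      have "reduce_mod q g $ i $ j = M $ i $ j" for i j
      proof -
        have "g $ i $ j mod q = M $ i $ j mod q" using g(2) by (simp add: congq_def cong_def)
        also have "\<dots> = M $ i $ j" using M by (simp add: SL2_mod_def)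
        finally show ?thesis by (simp add: reduce_mod_def)
      qed
      then have "reduce_mod q g = M" by (simp add: vec_eq_iff)
      then show "M \<in> reduce_mod q ` Gamma_A A" using g(1) by blast
    qed
  qed
qed

end
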